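(* Let $\lambda$ be a partition, $A=\mathcal{L}(\lambda)$, and let $i,j\ge1$ be integers with $\lambda[i,j]\neq()$. (1) If $\mathbb{SG}(A[i,j])=0$, then $d(\lambda[i,j])\ge1$ and $\mathbb{SG}(A[i-1,j-1])=0$. (2) If $\mathbb{SG}(A[i,j])=1$ and $d(\lambda[i,j])\ge2$, then $\mathbb{SG}(A[i-1,j-1])=1$. (3) If $\mathbb{SG}(A[i,j])=2$ and $d(\lambda[i,j])\ge3$, then $\mathbb{SG}(A[i-1,j-1])=2$.
   Context: A partition is a finite non-increasing sequence $\lambda=(\lambda_1,\dots,\lambda_r)$ of positive integers; $()$ is the empty partition. Durfee length: $d(\lambda)=\max\{k:\lambda_k\ge k\}$, and $d(())=0$. For non-negative $i,j$, $\lambda[i,j]$ is $(\lambda_{i+1}-j,\dots,\lambda_r-j)$ with all non-positive entries removed. LCTR: positions $\mathcal{L}(\mu)$; if $\mu\neq()$ the two moves go to $\mathcal{L}(\mu[1,0])$ and $\mathcal{L}(\mu[0,1])$; $\mathcal{L}(())$ is terminal. For $A=\mathcal{L}(\lambda)$, $A[i,j]=\mathcal{L}(\lambda[i,j])$. Normal play; $\mathbb{SG}(A)=\operatorname{mex}\{\mathbb{SG}(B):A\to B\}$. *)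

theory Defs
  imports Main
begin

text \<open>A partition is a list of naturals, non-increasing, with positive entries.
  The LCTR position L(mu) is identified with the partition mu.\<close>
definition is_partition :: "nat list \<Rightarrow> bool" where
  "is_partition l \<longleftrightarrow> sorted_wrt (\<ge>) l \<and> (\<forall>x\<in>set l. 0 < x)"

text \<open>lambda[i,j] = (lambda_{i+1}-j, ..., lambda_r-j) with non-positive entries removed.
  Truncated nat subtraction sends non-positive values to 0, which are then removed.\<close>
definition psub :: "nat list \<Rightarrow> nat \<Rightarrow> nat \<Rightarrow> nat list" where
  "psub l i j = filter (\<lambda>x. 0 < x) (map (\<lambda>x. x - j) (drop i l))"

definition durfee :: "nat list \<Rightarrow> nat" where
  "durfee l = Max ({0} \<union> {k. 1 \<le> k \<and> k \<le> length l \<and> k \<le> l ! (k - 1)})"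

definition mex :: "nat set \<Rightarrow> nat" where
  "mex S = (LEAST n. n \<notin> S)"

lemma psub_f0: "length (filter ((<) 0) xs) + sum_list (filter ((<) (0::nat)) xs) \<le> length xs + sum_list xs"
  by (induction xs) auto

lemma psub_f1: "xs \<noteq> [] \<Longrightarrow> length (filter ((<) 0) (map (\<lambda>x. x - 1) xs)) + sum_list (filter ((<) 0) (map (\<lambda>x. x - 1) xs)) < length xs + sum_list (xs::nat list)"
proof (induction xs)
  case (Cons x xs)
  then show ?case by (cases "xs = []") auto
qed simp

lemma psub_dec10: "l \<noteq> [] \<Longrightarrow> length (psub l 1 0) + sum_list (psub l 1 0) < length l + sum_list l"
  unfolding psub_def using psub_f0[of "tl l"] by (cases l) auto

lemma psub_dec01: "l \<noteq> [] \<Longrightarrow> length (psub l 0 1) + sum_list (psub l 0 1) < length l + sum_list l"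
  unfolding psub_def using psub_f1[of l] by simp

text \<open>Sprague-Grundy value of the LCTR position L(mu): L(()) is terminal,
  otherwise the moves go to L(mu[1,0]) and L(mu[0,1]).\<close>
function SG :: "nat list \<Rightarrow> nat" where
  "SG l = (if l = [] then 0 else mex {SG (psub l 1 0), SG (psub l 0 1)})"
  by auto
termination
  by (relation "measure (\<lambda>l. length l + sum_list l)")
     (simp_all add: psub_dec10[simplified] psub_dec01[simplified])

end

theory Submission
  imports Defs
begin

lemma mex2: "mex {x,y} = (if x \<noteq> 0 \<and> y \<noteq> 0 then 0 else if x \<noteq> 1 \<and> y \<noteq> 1 then 1 else 2)"
  unfolding mex_def
  apply (cases "x \<noteq> 0 \<and> y \<noteq> 0")
   apply (auto intro!: Least_equality)
  done

lemma drop_filter_desc: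
  "sorted_wrt (\<ge>) (xs::nat list) \<Longrightarrow>
   drop c (filter (\<lambda>x. 0 < x) (map (\<lambda>x. x - b) xs)) = filter (\<lambda>x. 0 < x) (map (\<lambda>x. x - b) (drop c xs))"
proof (induction xs arbitrary: c)
  case Nil then show ?case by simp
next
  case (Cons x ys)
  show ?case
  proof (cases "0 < x - b")
    case True
    then show ?thesis using Cons by (cases c) auto
  next
    case False
    then have "\<forall>y\<in>set ys. \<not> 0 < y - b" using Cons.prems by auto
    then have "filter (\<lambda>x. 0 < x) (map (\<lambda>x. x - b) ys) = []" by (force simp: filter_empty_conv)
    moreover have "filter (\<lambda>x. 0 < x) (map (\<lambda>x. x - b) (drop c' ys)) = []" for c'
      using \<open>\<forall>y\<in>set ys. \<not> 0 < y - b\<close> by (force dest: in_set_dropD simp: filter_empty_conv)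
    ultimately show ?thesis using False by (cases c) auto
  qed
qed

lemma filter_map_twice:
  "filter (\<lambda>x. 0 < x) (map (\<lambda>x. x - d) (filter (\<lambda>x. 0 < x) (map (\<lambda>x. x - b) (xs::nat list))))
   = filter (\<lambda>x. 0 < x) (map (\<lambda>x. x - (b+d)) xs)"
  by (induction xs) auto

lemma psub_psub:
  assumes "is_partition l"
  shows "psub (psub l a b) c d = psub l (a+c) (b+d)"
proof -
  have s: "sorted_wrt (\<ge>) (drop a l)" using assms unfolding is_partition_def
    by (simp add: sorted_wrt_drop)
  show ?thesis unfolding psub_def
    using drop_filter_desc[OF s, of c b] filter_map_twice[of d b "drop c (drop a l)"]
    by (simp add: add.commute)
qed

lemma psub_nonempty: "a < length l \<Longrightarrow> b < l ! a \<Longrightarrow> psub l a b \<noteq> []"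
proof -
  assume h: "a < length l" "b < l ! a"
  have "l ! a \<in> set (drop a l)" using h(1)
    by (metis Cons_nth_drop_Suc list.set_intros(1))
  then have "l ! a - b \<in> set (psub l a b)" using h(2) unfolding psub_def by auto
  then show ?thesis by auto
qed

lemma psub_sorted: "sorted_wrt (\<ge>) l \<Longrightarrow> sorted_wrt (\<ge>) (psub l a b)"
  unfolding psub_def
  apply (rule sorted_wrt_filter)
  apply (simp add: sorted_wrt_map)
  apply (rule sorted_wrt_mono_rel[where P="(\<ge>)"])
   apply (auto intro: diff_le_mono simp: sorted_wrt_drop)
  done

lemma local_lemmas:
  fixes G :: "nat \<Rightarrow> nat \<Rightarrow> nat" and N :: "nat \<Rightarrow> nat \<Rightarrow> bool"
  assumes rec0: "\<forall>a b. G a b = (if N a b then mex {G (Suc a) b, G a (Suc b)} else 0)"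
    and mono0: "\<forall>a b a' b'. N a b \<longrightarrow> a' \<le> a \<longrightarrow> b' \<le> b \<longrightarrow> N a' b'"
  shows L1: "\<And>a b. N (a+1) (b+1) \<Longrightarrow> G (a+1) (b+1) = 0 \<Longrightarrow> G a b = 0"
    and L2: "\<And>a b. N (a+2) (b+2) \<Longrightarrow> G (a+1) (b+1) = 1 \<Longrightarrow> G a b = 1"
    and L3: "\<And>a b. N (a+3) (b+3) \<Longrightarrow> G (a+1) (b+1) = 2 \<Longrightarrow> G a b = 2"
proof -
  have mono: "\<And>a b a' b'. N a b \<Longrightarrow> a' \<le> a \<Longrightarrow> b' \<le> b \<Longrightarrow> N a' b'"
    using mono0 by blast
  have rec: "\<And>a b. G a b = (if N a b then mex {G (Suc a) b, G a (Suc b)} else 0)"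
    using rec0 by blast
  have R: "\<And>a b. N a b \<Longrightarrow> G a b = mex {G (Suc a) b, G a (Suc b)}" using rec by simp
  show l1: "\<And>a b. N (a+1) (b+1) \<Longrightarrow> G (a+1) (b+1) = 0 \<Longrightarrow> G a b = 0"
  proof -
    fix a b assume n: "N (a+1) (b+1)" and z: "G (a+1) (b+1) = 0"
    have n1: "N (a+1) b" "N a (b+1)" "N a b" using mono[OF n] by auto
    have "G (a+1) b \<noteq> 0" using R[OF n1(1)] z by (simp add: mex2)
    moreover have "G a (b+1) \<noteq> 0" using R[OF n1(2)] z by (simp add: mex2)
    ultimately show "G a b = 0" using R[OF n1(3)] by (simp add: mex2)
  qed
  show l2: "\<And>a b. N (a+2) (b+2) \<Longrightarrow> G (a+1) (b+1) = 1 \<Longrightarrow> G a b = 1"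
  proof -
    fix a b assume n: "N (a+2) (b+2)" and z: "G (a+1) (b+1) = 1"
    have n1: "N (a+2) (b+1)" "N (a+1) (b+2)" "N (a+1) (b+1)" "N (a+1) b" "N a (b+1)" "N a b"
      using mono[OF n] by auto
    have pq: "G (a+2) (b+1) = 0 \<or> G (a+1) (b+2) = 0"
      using R[OF n1(3)] z by (auto simp: mex2 split: if_splits)
    then show "G a b = 1"
    proof
      assume "G (a+2) (b+1) = 0"
      then have "G (a+1) b = 0" using l1[of "a+1" b] n1(1) by simp
      moreover have "G a (b+1) \<noteq> 1" using R[OF n1(5)] z by (simp add: mex2)
      ultimately show "G a b = 1" using R[OF n1(6)] by (simp add: mex2)
    next
      assume "G (a+1) (b+2) = 0"
      then have "G a (b+1) = 0" using l1[of a "b+1"] n1(2) by simp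
      moreover have "G (a+1) b \<noteq> 1" using R[OF n1(4)] z by (simp add: mex2)
      ultimately show "G a b = 1" using R[OF n1(6)] by (simp add: mex2)
    qed
  qed
  show "\<And>a b. N (a+3) (b+3) \<Longrightarrow> G (a+1) (b+1) = 2 \<Longrightarrow> G a b = 2"
  proof -
    fix a b assume n: "N (a+3) (b+3)" and z: "G (a+1) (b+1) = 2"
    have n1: "N (a+2) (b+1)" "N (a+1) (b+2)" "N (a+1) (b+1)" "N (a+1) b" "N a (b+1)" "N a b"
       "N (a+2) (b+3)" "N (a+3) (b+2)"
      using mono[OF n] by auto
    have pq: "(G (a+2) (b+1) = 0 \<and> G (a+1) (b+2) = 1) \<or> (G (a+2) (b+1) = 1 \<and> G (a+1) (b+2) = 0)"
      using R[OF n1(3)] z by (auto simp: mex2 split: if_splits)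
    then show "G a b = 2"
    proof
      assume h: "G (a+2) (b+1) = 0 \<and> G (a+1) (b+2) = 1"
      then have "G (a+1) b = 0" using l1[of "a+1" b] n1(1) by simp
      moreover have "G a (b+1) = 1" using l2[of a "b+1"] n1(7) h by (simp add: numeral_eq_Suc)
      ultimately show "G a b = 2" using R[OF n1(6)] by (simp add: mex2)
    next
      assume h: "G (a+2) (b+1) = 1 \<and> G (a+1) (b+2) = 0"
      then have "G a (b+1) = 0" using l1[of a "b+1"] n1(2) by simp
      moreover have "G (a+1) b = 1" using l2[of "a+1" b] n1(8) h by (simp add: numeral_eq_Suc)
      ultimately show "G a b = 2" using R[OF n1(6)] by (simp add: mex2)
    qed
  qed
qed

lemma durfee_ge:
  assumes s: "sorted_wrt (\<ge>) l" and d: "durfee l \<ge> m" and m: "m \<ge> 1"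
  shows "m - 1 < length l \<and> m \<le> l ! (m - 1)"
proof -
  let ?S = "{0} \<union> {k. 1 \<le> k \<and> k \<le> length l \<and> k \<le> l ! (k - 1)}"
  have f: "finite ?S" by (rule finite_subset[of _ "{0..length l}"]) auto
  define k where "k = Max ?S"
  have k0: "k \<in> ?S" unfolding k_def by (rule Max_in[OF f]) simp
  have k: "k \<in> ?S" "m \<le> k" using d k0 unfolding durfee_def k_def by auto
  then have k1: "1 \<le> k" "k \<le> length l" "k \<le> l ! (k - 1)" using m by auto
  have "l ! (k - 1) \<le> l ! (m - 1)"
  proof (cases "m = k")
    case False
    then show ?thesis using s k1 k(2) m by (auto simp: sorted_wrt_iff_nth_less)
  qed simp
  then show ?thesis using k1 k(2) m by auto
qed

theorem mainTheorem10:
  fixes lam :: "nat list" and i j :: nat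
  assumes "is_partition lam" and "1 \<le> i" and "1 \<le> j"
    and "psub lam i j \<noteq> []"
  shows "(SG (psub lam i j) = 0 \<longrightarrow>
            durfee (psub lam i j) \<ge> 1 \<and> SG (psub lam (i - 1) (j - 1)) = 0)
       \<and> (SG (psub lam i j) = 1 \<and> durfee (psub lam i j) \<ge> 2 \<longrightarrow>
            SG (psub lam (i - 1) (j - 1)) = 1)
       \<and> (SG (psub lam i j) = 2 \<and> durfee (psub lam i j) \<ge> 3 \<longrightarrow>
            SG (psub lam (i - 1) (j - 1)) = 2)"
proof -
  define G where "G a b = SG (psub lam a b)" for a b
  define N where "N a b = (psub lam a b \<noteq> [])" for a b
  have P: "is_partition lam" by fact
  have rec: "\<And>a b. G a b = (if N a b then mex {G (Suc a) b, G a (Suc b)} else 0)"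
    unfolding G_def N_def
    by (subst SG.simps) (auto simp: psub_psub[OF P])
  have mono: "\<And>a b a' b'. N a b \<Longrightarrow> a' \<le> a \<Longrightarrow> b' \<le> b \<Longrightarrow> N a' b'"
  proof -
    fix a b a' b' assume "N a b" "a' \<le> a" "b' \<le> b"
    then have "psub (psub lam a' b') (a - a') (b - b') \<noteq> []"
      unfolding N_def by (simp add: psub_psub[OF P])
    then show "N a' b'" unfolding N_def psub_def by auto
  qed
  have rec0: "\<forall>a b. G a b = (if N a b then mex {G (Suc a) b, G a (Suc b)} else 0)"
    using rec by blast
  have mono0: "\<forall>a b a' b'. N a b \<longrightarrow> a' \<le> a \<longrightarrow> b' \<le> b \<longrightarrow> N a' b'"
    using mono by blast
  note LL = local_lemmas[OF rec0 mono0]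
  obtain a b where ab: "i = a + 1" "j = b + 1" using assms(2,3)
    by (metis add.commute le_add_diff_inverse)
  let ?l = "psub lam i j"
  have sl: "sorted_wrt (\<ge>) ?l" using P psub_sorted unfolding is_partition_def by blast
  have nd: "N (a+Suc m) (b+Suc m)" if "durfee ?l \<ge> m + 1" for m
  proof -
    have "m < length ?l \<and> m + 1 \<le> ?l ! m" using durfee_ge[OF sl that] by simp
    then have "psub ?l m m \<noteq> []" by (intro psub_nonempty) auto
    then show ?thesis unfolding N_def using ab by (simp add: psub_psub[OF P] add_ac)
  qed
  have N1: "N (a+1) (b+1)" using assms(4) ab unfolding N_def by simp
  have d1: "durfee ?l \<ge> 1"
  proof -
    let ?S = "{0} \<union> {k. 1 \<le> k \<and> k \<le> length ?l \<and> k \<le> ?l ! (k - 1)}"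
    have f: "finite ?S" by (rule finite_subset[of _ "{0..length ?l}"]) auto
    have pos: "\<forall>x\<in>set ?l. 0 < x" unfolding psub_def by auto
    have "?l ! 0 \<in> set ?l" using assms(4) by simp
    then have "1 \<in> ?S" using pos assms(4) by (auto simp: Suc_le_eq)
    then show ?thesis unfolding durfee_def using f by (meson Max_ge order_trans le_refl)
  qed
  have N2: "N (a+2) (b+2)" if "durfee ?l \<ge> 2" using nd[of 1] that by (simp add: numeral_eq_Suc)
  have N3: "N (a+3) (b+3)" if "durfee ?l \<ge> 3" using nd[of 2] that by (simp add: numeral_eq_Suc)
  have E: "psub lam i j = psub lam (a+1) (b+1)" "psub lam (i-1) (j-1) = psub lam a b" using ab by auto
  have F1: "SG (psub lam (a+1) (b+1)) = 0 \<Longrightarrow> SG (psub lam a b) = 0"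
    using LL(1)[OF N1] unfolding G_def .
  have F2: "durfee ?l \<ge> 2 \<Longrightarrow> SG (psub lam (a+1) (b+1)) = 1 \<Longrightarrow> SG (psub lam a b) = 1"
    using LL(2)[OF N2] unfolding G_def .
  have F3: "durfee ?l \<ge> 3 \<Longrightarrow> SG (psub lam (a+1) (b+1)) = 2 \<Longrightarrow> SG (psub lam a b) = 2"
    using LL(3)[OF N3] unfolding G_def .
  show ?thesis
    using F1 F2 F3 d1 unfolding E by blast
qed

end
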